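(* Let $n\in\{2,3\}$. For every set $\mathcal{S}$ of five of the six orders of three labels $A,B,C$, there exist three $n$-dimensional boxes $A,B,C$ such that every order in $\mathcal{S}$ (innermost to outermost) is a possible arrangement.
   Context: An $n$-dimensional box $A$ has closed side lengths $a_1\le\dots\le a_n$ (positive reals). A state of $A$ is either closed or expanded along one side $i$: $a_i$ is replaced by $a_i'$ with $a_i\le a_i'\le 2a_i$, other sides unchanged (only one side can expand). The dimension vector of a state is its side lengths sorted non-decreasingly. A box in some state fits inside another box in some state if each coordinate of the outer one's dimension vector is strictly larger than the corresponding coordinate of the inner one's. An order $X_1,\dots,X_k$ (innermost to outermost) is a possible arrangement if each box can be given a state so that $X_j$ fits inside $X_{j+1}$ for all $j$; states may differ between arrangements. *)

theory Defs
  imports Complex_Main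
begin

text \<open>A box in dimension n is given by its closed side lengths a_1 \<le> ... \<le> a_n (positive reals),
  represented as a sorted list of length n.\<close>
definition is_box :: "nat \<Rightarrow> real list \<Rightarrow> bool" where
  "is_box n a \<longleftrightarrow> length a = n \<and> sorted a \<and> (\<forall>x\<in>set a. 0 < x)"

text \<open>s is a state of box a: closed, or expanded along exactly one side i,
  a_i replaced by a_i' with a_i \<le> a_i' \<le> 2 a_i.\<close>
definition is_state :: "real list \<Rightarrow> real list \<Rightarrow> bool" where
  "is_state a s \<longleftrightarrow> s = a \<or>
     (\<exists>i<length a. \<exists>x. a ! i \<le> x \<and> x \<le> 2 * a ! i \<and> s = a[i := x])"

definition dimvec :: "real list \<Rightarrow> real list" where
  "dimvec s = sort s"

definition fits_in :: "real list \<Rightarrow> real list \<Rightarrow> bool" where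
  "fits_in s t \<longleftrightarrow> length s = length t \<and>
     (\<forall>i<length s. dimvec s ! i < dimvec t ! i)"

definition possible_arrangement :: "real list list \<Rightarrow> bool" where
  "possible_arrangement Xs \<longleftrightarrow>
     (\<exists>ss. length ss = length Xs \<and> (\<forall>j<length Xs. is_state (Xs ! j) (ss ! j)) \<and>
        (\<forall>j. Suc j < length Xs \<longrightarrow> fits_in (ss ! j) (ss ! Suc j)))"

datatype label = LA | LB | LC

definition label_box :: "real list \<Rightarrow> real list \<Rightarrow> real list \<Rightarrow> label \<Rightarrow> real list" where
  "label_box A B C l = (case l of LA \<Rightarrow> A | LB \<Rightarrow> B | LC \<Rightarrow> C)"

definition label_orders :: "label list set" where
  "label_orders = {p. distinct p \<and> set p = {LA, LB, LC}}"

end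

theory Submission
  imports Defs
begin

lemma pa3:
  assumes "is_state X s1" "is_state Y s2" "is_state Z s3" "fits_in s1 s2" "fits_in s2 s3"
  shows "possible_arrangement [X,Y,Z]"
  unfolding possible_arrangement_def
  apply (rule exI[of _ "[s1,s2,s3]"])
  using assms by (auto simp: less_Suc_eq numeral_eq_Suc)

lemma st_closed: "is_state a a" by (simp add: is_state_def)

lemma st_exp: "i < length a \<Longrightarrow> a ! i \<le> x \<Longrightarrow> x \<le> 2 * a ! i \<Longrightarrow> is_state a (a[i := x])"
  unfolding is_state_def by blast

lemmas fsimps = fits_in_def dimvec_def numeral_eq_Suc less_Suc_eq

lemma label_orders_eq:
  "label_orders = {[LA,LB,LC],[LA,LC,LB],[LB,LA,LC],[LB,LC,LA],[LC,LA,LB],[LC,LB,LA]}"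
proof -
  have "p \<in> {[LA,LB,LC],[LA,LC,LB],[LB,LA,LC],[LB,LC,LA],[LC,LA,LB],[LC,LB,LA]}"
    if d: "distinct p" and s: "set p = {LA, LB, LC}" for p
  proof -
    have "length p = 3" using distinct_card[OF d] s by simp
    then obtain x y z where p: "p = [x,y,z]"
      by (auto simp: numeral_eq_Suc length_Suc_conv)
    show ?thesis using d s unfolding p
      by (cases x; cases y; cases z) auto
  qed
  then show ?thesis unfolding label_orders_def by auto
qed

lemma gen:
  assumes "is_box n P" "is_box n Q" "is_box n R"
    and "possible_arrangement [Q,P,R]" "possible_arrangement [Q,R,P]"
    "possible_arrangement [R,P,Q]" "possible_arrangement [R,Q,P]"
    "possible_arrangement [P,R,Q]"
    and "S \<subseteq> label_orders" and "card S = 5"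
  shows "\<exists>A B C. is_box n A \<and> is_box n B \<and> is_box n C \<and>
           (\<forall>p\<in>S. possible_arrangement (map (label_box A B C) p))"
proof -
  have cL: "card label_orders = 6" unfolding label_orders_eq by simp
  have "S \<noteq> label_orders" using assms(10) cL by auto
  then obtain q where q: "q \<in> label_orders" "q \<notin> S" using assms(9) by blast
  then have Sq: "S \<subseteq> label_orders - {q}" using assms(9) by blast
  from q(1) show ?thesis unfolding label_orders_eq
  proof (elim insertE emptyE)
    assume "q = [LA,LB,LC]"
    then show ?thesis using Sq assms
      by (intro exI[of _ P] exI[of _ Q] exI[of _ R]) (auto simp: label_orders_eq label_box_def)
  next
    assume "q = [LA,LC,LB]"
    then show ?thesis using Sq assms
      by (intro exI[of _ P] exI[of _ R] exI[of _ Q]) (auto simp: label_orders_eq label_box_def)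
  next
    assume "q = [LB,LA,LC]"
    then show ?thesis using Sq assms
      by (intro exI[of _ Q] exI[of _ P] exI[of _ R]) (auto simp: label_orders_eq label_box_def)
  next
    assume "q = [LB,LC,LA]"
    then show ?thesis using Sq assms
      by (intro exI[of _ R] exI[of _ P] exI[of _ Q]) (auto simp: label_orders_eq label_box_def)
  next
    assume "q = [LC,LA,LB]"
    then show ?thesis using Sq assms
      by (intro exI[of _ Q] exI[of _ R] exI[of _ P]) (auto simp: label_orders_eq label_box_def)
  next
    assume "q = [LC,LB,LA]"
    then show ?thesis using Sq assms
      by (intro exI[of _ R] exI[of _ Q] exI[of _ P]) (auto simp: label_orders_eq label_box_def)
  qed
qed

lemma case2:
  assumes "S \<subseteq> label_orders" and "card S = 5"
  shows "\<exists>A B C. is_box 2 A \<and> is_box 2 B \<and> is_box 2 C \<and>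
           (\<forall>p\<in>S. possible_arrangement (map (label_box A B C) p))"
proof -
  define P :: "real list" where "P = [9,11]"
  define Q :: "real list" where "Q = [8,11]"
  define R :: "real list" where "R = [7,10]"
  have b: "is_box 2 P" "is_box 2 Q" "is_box 2 R" by (auto simp: P_def Q_def R_def is_box_def)
  have "possible_arrangement [P,R,Q]"
    by (rule pa3[OF st_closed st_exp[of 0 _ "49/4"] st_exp[of 0 _ 14]])
       (simp_all add: P_def Q_def R_def fsimps)
  moreover have "possible_arrangement [Q,P,R]"
    by (rule pa3[OF st_closed st_exp[of 1 _ "55/4"] st_exp[of 0 _ 14]])
       (simp_all add: P_def Q_def R_def fsimps)
  moreover have "possible_arrangement [Q,R,P]"
    by (rule pa3[OF st_closed st_exp[of 0 _ "49/4"] st_exp[of 0 _ "27/2"]])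
       (simp_all add: P_def Q_def R_def fsimps)
  moreover have "possible_arrangement [R,P,Q]"
    by (rule pa3[OF st_closed st_closed st_exp[of 0 _ 12]])
       (simp_all add: P_def Q_def R_def fsimps)
  moreover have "possible_arrangement [R,Q,P]"
    by (rule pa3[OF st_closed st_closed st_exp[of 0 _ "45/4"]])
       (simp_all add: P_def Q_def R_def fsimps)
  ultimately show ?thesis using gen[OF b _ _ _ _ _ assms] by blast
qed

lemma case3:
  assumes "S \<subseteq> label_orders" and "card S = 5"
  shows "\<exists>A B C. is_box 3 A \<and> is_box 3 B \<and> is_box 3 C \<and>
           (\<forall>p\<in>S. possible_arrangement (map (label_box A B C) p))"
proof -
  define P :: "real list" where "P = [11,15,17]"
  define Q :: "real list" where "Q = [10,14,17]"
  define R :: "real list" where "R = [11,12,16]"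
  have b: "is_box 3 P" "is_box 3 Q" "is_box 3 R" by (auto simp: P_def Q_def R_def is_box_def)
  have "possible_arrangement [P,R,Q]"
    by (rule pa3[OF st_closed st_exp[of 0 _ "77/4"] st_exp[of 0 _ 20]])
       (simp_all add: P_def Q_def R_def fsimps)
  moreover have "possible_arrangement [Q,P,R]"
    by (rule pa3[OF st_closed st_exp[of 2 _ "85/4"] st_exp[of 0 _ 22]])
       (simp_all add: P_def Q_def R_def fsimps)
  moreover have "possible_arrangement [Q,R,P]"
    by (rule pa3[OF st_closed st_exp[of 0 _ "77/4"] st_exp[of 0 _ 22]])
       (simp_all add: P_def Q_def R_def fsimps)
  moreover have "possible_arrangement [R,P,Q]"
    by (rule pa3[OF st_closed st_exp[of 0 _ "55/4"] st_exp[of 0 _ "35/2"]])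
       (simp_all add: P_def Q_def R_def fsimps)
  moreover have "possible_arrangement [R,Q,P]"
    by (rule pa3[OF st_closed st_exp[of 0 _ "25/2"] st_exp[of 0 _ "77/4"]])
       (simp_all add: P_def Q_def R_def fsimps)
  ultimately show ?thesis using gen[OF b _ _ _ _ _ assms] by blast
qed

theorem proposition22:
  fixes n :: nat and S :: "label list set"
  assumes "n \<in> {2, 3}"
    and "S \<subseteq> label_orders" and "card S = 5"
  shows "\<exists>A B C. is_box n A \<and> is_box n B \<and> is_box n C \<and>
           (\<forall>p\<in>S. possible_arrangement (map (label_box A B C) p))"
  using assms(1) case2[OF assms(2,3)] case3[OF assms(2,3)] by auto

end
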